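(* Let $\Lambda=\{\lambda_1,\dots,\lambda_N\}$ be a finite set of non-zero complex numbers such that (1) $\Lambda=\bar\Lambda$ (closed under complex conjugation), (2) $1\in\Lambda$, and (3) $|\lambda|\le1$ for all $\lambda\in\Lambda$. Then there exists a completely positive trace-preserving linear map $T:\mathcal{M}_d(\mathbb{C})\to\mathcal{M}_d(\mathbb{C})$ with $d\le 2\max\{N-1,1\}$ such that $\{\mathrm{spec}(T)\}\setminus\{0\}=\Lambda$. Conversely, if $\Lambda$ is the spectral set $\{\mathrm{spec}(T)\}$ of a positive trace-preserving linear map $T$ on some $\mathcal{M}_d(\mathbb{C})$, then $\Lambda$ satisfies (1)–(3).
   Context: $\{\mathrm{spec}(T)\}$ denotes the spectral set of $T$: the set (without multiplicities) of $\lambda\in\mathbb{C}$ for which $T-\lambda\,\mathrm{id}$ is not invertible on $\mathcal{M}_d(\mathbb{C})$. Positive: maps positive semidefinite matrices to positive semidefinite matrices; completely positive: $T\otimes\mathrm{id}_d$ is positive; trace-preserving: $\mathrm{tr}[T(X)]=\mathrm{tr}[X]$. *)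

theory Defs
  imports "Jordan_Normal_Form.Matrix"
begin

definition psd_mat :: "nat \<Rightarrow> complex mat \<Rightarrow> bool" where
  "psd_mat n A \<longleftrightarrow> A \<in> carrier_mat n n \<and>
     (\<forall>v :: nat \<Rightarrow> complex.
        Im (\<Sum>i<n. \<Sum>j<n. cnj (v i) * A $$ (i, j) * v j) = 0 \<and>
        Re (\<Sum>i<n. \<Sum>j<n. cnj (v i) * A $$ (i, j) * v j) \<ge> 0)"

definition lin_map_on :: "nat \<Rightarrow> (complex mat \<Rightarrow> complex mat) \<Rightarrow> bool" where
  "lin_map_on d T \<longleftrightarrow>
     (\<forall>X \<in> carrier_mat d d. T X \<in> carrier_mat d d) \<and>
     (\<forall>X \<in> carrier_mat d d. \<forall>Y \<in> carrier_mat d d. T (X + Y) = T X + T Y) \<and>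
     (\<forall>c. \<forall>X \<in> carrier_mat d d. T (c \<cdot>\<^sub>m X) = c \<cdot>\<^sub>m T X)"

definition positive_map :: "nat \<Rightarrow> (complex mat \<Rightarrow> complex mat) \<Rightarrow> bool" where
  "positive_map d T \<longleftrightarrow> (\<forall>X. psd_mat d X \<longrightarrow> psd_mat d (T X))"

definition trace_preserving :: "nat \<Rightarrow> (complex mat \<Rightarrow> complex mat) \<Rightarrow> bool" where
  "trace_preserving d T \<longleftrightarrow> (\<forall>X \<in> carrier_mat d d. (\<Sum>i<d. T X $$ (i, i)) = (\<Sum>i<d. X $$ (i, i)))"

text \<open>T \<otimes> id_d on M_d \<otimes> M_d = M_(d*d); the tensor index (i,a) (i for the first
  factor, a for the second) is encoded as i*d + a.\<close>
definition tensor_id :: "nat \<Rightarrow> (complex mat \<Rightarrow> complex mat) \<Rightarrow> complex mat \<Rightarrow> complex mat" where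
  "tensor_id d T Y = mat (d*d) (d*d) (\<lambda>(p, q).
      T (mat d d (\<lambda>(i, j). Y $$ (i*d + p mod d, j*d + q mod d))) $$ (p div d, q div d))"

definition completely_positive :: "nat \<Rightarrow> (complex mat \<Rightarrow> complex mat) \<Rightarrow> bool" where
  "completely_positive d T \<longleftrightarrow> (\<forall>Y. psd_mat (d*d) Y \<longrightarrow> psd_mat (d*d) (tensor_id d T Y))"

definition spec_set :: "nat \<Rightarrow> (complex mat \<Rightarrow> complex mat) \<Rightarrow> complex set" where
  "spec_set d T = {z. \<not> bij_betw (\<lambda>X. T X - z \<cdot>\<^sub>m X) (carrier_mat d d) (carrier_mat d d)}"

end

theory Submission
  imports Defs "Jordan_Normal_Form.Determinant"
begin


definition qf :: "nat \<Rightarrow> complex mat \<Rightarrow> (nat \<Rightarrow> complex) \<Rightarrow> complex" where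
  "qf n A v = (\<Sum>i<n. \<Sum>j<n. cnj (v i) * A $$ (i, j) * v j)"

lemma psd_mat_qf: "psd_mat n A \<longleftrightarrow> A \<in> carrier_mat n n \<and> (\<forall>v. Im (qf n A v) = 0 \<and> Re (qf n A v) \<ge> 0)"
  unfolding psd_mat_def qf_def by simp

definition schur :: "nat \<Rightarrow> (nat \<Rightarrow> nat \<Rightarrow> complex) \<Rightarrow> complex mat \<Rightarrow> complex mat" where
  "schur d M X = mat d d (\<lambda>(i,j). M i j * X $$ (i,j))"

lemma psd_schur_gen:
  assumes Y: "psd_mat n Y" and fin: "finite I"
    and N: "\<And>p q. p < n \<Longrightarrow> q < n \<Longrightarrow> N p q = (\<Sum>r\<in>I. cnj (w r p) * w r q)"
  shows "psd_mat n (mat n n (\<lambda>(p,q). N p q * Y $$ (p,q)))"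
proof -
  have Yc: "Y \<in> carrier_mat n n" and Yq: "\<And>v. Im (qf n Y v) = 0 \<and> Re (qf n Y v) \<ge> 0"
    using Y unfolding psd_mat_qf by auto
  have key: "qf n (mat n n (\<lambda>(p,q). N p q * Y $$ (p,q))) v = (\<Sum>r\<in>I. qf n Y (\<lambda>i. v i * w r i))" for v
  proof -
    have "qf n (mat n n (\<lambda>(p,q). N p q * Y $$ (p,q))) v
        = (\<Sum>i<n. \<Sum>j<n. \<Sum>r\<in>I. cnj (v i * w r i) * Y $$ (i, j) * (v j * w r j))"
      unfolding qf_def
      by (rule sum.cong[OF refl], rule sum.cong[OF refl])
         (simp add: N sum_distrib_left sum_distrib_right algebra_simps)
    also have "\<dots> = (\<Sum>i<n. \<Sum>r\<in>I. \<Sum>j<n. cnj (v i * w r i) * Y $$ (i, j) * (v j * w r j))"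
      by (rule sum.cong[OF refl], rule sum.swap)
    also have "\<dots> = (\<Sum>r\<in>I. \<Sum>i<n. \<Sum>j<n. cnj (v i * w r i) * Y $$ (i, j) * (v j * w r j))"
      by (rule sum.swap)
    finally show ?thesis unfolding qf_def .
  qed
  show ?thesis unfolding psd_mat_qf
  proof (intro conjI allI)
    fix v
    show "Im (qf n (mat n n (\<lambda>(p, q). N p q * Y $$ (p, q))) v) = 0"
      unfolding key Im_sum using Yq by simp
    show "0 \<le> Re (qf n (mat n n (\<lambda>(p, q). N p q * Y $$ (p, q))) v)"
      unfolding key Re_sum using Yq by (simp add: sum_nonneg)
  qed auto
qed

lemma lin_schur: "lin_map_on d (schur d M)"
  unfolding lin_map_on_def schur_def
  by (auto intro!: eq_matI simp: algebra_simps)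

lemma tp_schur: assumes "\<And>i. i < d \<Longrightarrow> M i i = 1" shows "trace_preserving d (schur d M)"
  unfolding trace_preserving_def schur_def using assms by auto

lemma cp_schur:
  assumes fin: "finite I"
    and N: "\<And>p q. p < d \<Longrightarrow> q < d \<Longrightarrow> M p q = (\<Sum>r\<in>I. cnj (w r p) * w r q)"
  shows "completely_positive d (schur d M)"
  unfolding completely_positive_def
proof (intro allI impI)
  fix Y assume Y: "psd_mat (d*d) Y"
  have eq: "tensor_id d (schur d M) Y = mat (d*d) (d*d) (\<lambda>(p,q). M (p div d) (q div d) * Y $$ (p,q))"
  proof (rule eq_matI)
    fix p q assume p: "p < dim_row (mat (d*d) (d*d) (\<lambda>(p,q). M (p div d) (q div d) * Y $$ (p,q)))"
      and q: "q < dim_col (mat (d*d) (d*d) (\<lambda>(p,q). M (p div d) (q div d) * Y $$ (p,q)))"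
    hence p': "p < d*d" and q': "q < d*d" by auto
    have "p div d < d" "q div d < d" using p' q' by (auto simp: less_mult_imp_div_less)
    moreover have "p div d * d + p mod d = p" "q div d * d + q mod d = q" by auto
    ultimately show "tensor_id d (schur d M) Y $$ (p, q) = mat (d*d) (d*d) (\<lambda>(p,q). M (p div d) (q div d) * Y $$ (p,q)) $$ (p, q)"
      unfolding tensor_id_def schur_def using p' q' by simp
  qed (auto simp: tensor_id_def)
  show "psd_mat (d*d) (tensor_id d (schur d M) Y)"
    unfolding eq
    by (rule psd_schur_gen[OF Y fin, where w="\<lambda>r p. w r (p div d)"])
       (auto intro!: N simp: less_mult_imp_div_less)
qed

lemma spec_schur: "spec_set d (schur d M) = {M i j | i j. i < d \<and> j < d}"
proof (rule Set.set_eqI)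
  fix z
  let ?S = "\<lambda>X. schur d M X - z \<cdot>\<^sub>m X"
  have S: "X \<in> carrier_mat d d \<Longrightarrow> ?S X = mat d d (\<lambda>(i,j). (M i j - z) * X $$ (i,j))" for X
    by (rule eq_matI) (auto simp: schur_def algebra_simps)
  show "z \<in> spec_set d (schur d M) \<longleftrightarrow> z \<in> {M i j | i j. i < d \<and> j < d}"
  proof
    assume z: "z \<in> spec_set d (schur d M)"
    show "z \<in> {M i j | i j. i < d \<and> j < d}"
    proof (rule ccontr)
      assume nz: "z \<notin> {M i j | i j. i < d \<and> j < d}"
      hence nz': "i < d \<Longrightarrow> j < d \<Longrightarrow> M i j - z \<noteq> 0" for i j by auto
      have "bij_betw ?S (carrier_mat d d) (carrier_mat d d)"
        unfolding bij_betw_def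
      proof
        show "inj_on ?S (carrier_mat d d)"
        proof (rule inj_onI)
          fix X Y :: "complex mat" assume X: "X \<in> carrier_mat d d" and Y: "Y \<in> carrier_mat d d" and e: "?S X = ?S Y"
          show "X = Y"
          proof (rule eq_matI)
            fix i j assume i: "i < dim_row Y" and j: "j < dim_col Y"
            have "?S X $$ (i,j) = ?S Y $$ (i,j)" using e by simp
            thus "X $$ (i,j) = Y $$ (i,j)" using S[OF X] S[OF Y] i j Y nz'[of i j] by auto
          qed (use X Y in auto)
        qed
        show "?S ` carrier_mat d d = carrier_mat d d"
        proof
          show "?S ` carrier_mat d d \<subseteq> carrier_mat d d" using S by auto
          show "carrier_mat d d \<subseteq> ?S ` carrier_mat d d"
          proof
            fix Y :: "complex mat" assume Y: "Y \<in> carrier_mat d d"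
            let ?X = "mat d d (\<lambda>(i,j). Y $$ (i,j) / (M i j - z))"
            have "?S ?X = mat d d (\<lambda>(i,j). (M i j - z) * ?X $$ (i,j))" by (rule S) simp
            also have "\<dots> = Y"
            proof (rule eq_matI)
              fix i j assume "i < dim_row Y" "j < dim_col Y"
              hence i: "i < d" and j: "j < d" using Y by auto
              show "mat d d (\<lambda>(i,j). (M i j - z) * ?X $$ (i,j)) $$ (i,j) = Y $$ (i,j)"
                using i j nz'[OF i j] by simp
            qed (use Y in auto)
            finally have SX: "?S ?X = Y" .
            show "Y \<in> ?S ` carrier_mat d d" using SX by (intro image_eqI[where x="?X" and f="?S"]) auto
          qed
        qed
      qed
      thus False using z unfolding spec_set_def by auto
    qed
  next
    assume "z \<in> {M i j | i j. i < d \<and> j < d}"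
    then obtain i j where i: "i < d" and j: "j < d" and zi: "z = M i j" by auto
    let ?E = "mat d d (\<lambda>(k,l). if (k,l) = (i,j) then 1 else 0) :: complex mat"
    have "?S ?E = ?S (0\<^sub>m d d)" by (subst S, simp, subst S, simp, rule eq_matI, auto simp: zi)
    moreover have "?E \<noteq> 0\<^sub>m d d"
    proof
      assume "?E = 0\<^sub>m d d" hence "?E $$ (i,j) = 0\<^sub>m d d $$ (i,j)" by simp
      thus False using i j by simp
    qed
    moreover have "?E \<in> carrier_mat d d" by simp
    ultimately have "\<not> inj_on ?S (carrier_mat d d)"
      using inj_onD[of ?S "carrier_mat d d" ?E "0\<^sub>m d d"] zero_carrier_mat[of d d] by blast
    thus "z \<in> spec_set d (schur d M)" unfolding spec_set_def bij_betw_def by auto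
  qed
qed



definition Em :: "nat \<Rightarrow> nat \<Rightarrow> complex mat" where
  "Em d q = mat d d (\<lambda>(i,j). if i*d+j = q then 1 else 0)"

lemma lin_closed: "lin_map_on d S \<Longrightarrow> X \<in> carrier_mat d d \<Longrightarrow> S X \<in> carrier_mat d d"
  unfolding lin_map_on_def by auto
lemma lin_add: "lin_map_on d S \<Longrightarrow> X \<in> carrier_mat d d \<Longrightarrow> Y \<in> carrier_mat d d \<Longrightarrow> S (X + Y) = S X + S Y"
  unfolding lin_map_on_def by auto
lemma lin_smult: "lin_map_on d S \<Longrightarrow> X \<in> carrier_mat d d \<Longrightarrow> S (c \<cdot>\<^sub>m X) = c \<cdot>\<^sub>m S X"
  unfolding lin_map_on_def by auto

lemma lin_zero: assumes "lin_map_on d S" shows "S (0\<^sub>m d d) = 0\<^sub>m d d"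
proof -
  have "S (0\<^sub>m d d) = S (0 \<cdot>\<^sub>m 0\<^sub>m d d)" by simp
  also have "\<dots> = 0 \<cdot>\<^sub>m S (0\<^sub>m d d)" using lin_smult[OF assms zero_carrier_mat, of 0] by simp
  also have "\<dots> = 0\<^sub>m d d" using lin_closed[OF assms, of "0\<^sub>m d d"] by (auto intro!: eq_matI)
  finally show ?thesis .
qed

lemma idx_div: "k < d \<Longrightarrow> l < d \<Longrightarrow> (k*d+l) div (d::nat) = k" by (simp add: add.commute[of "k*d"])
lemma idx_mod: "k < d \<Longrightarrow> l < d \<Longrightarrow> (k*d+l) mod (d::nat) = l" by (simp add: add.commute[of "k*d"])
lemma idx_lt: "k < d \<Longrightarrow> l < (d::nat) \<Longrightarrow> k*d+l < d*d"
proof -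
  assume k: "k < d" and l: "l < d"
  have "k*d+l < k*d + d" using l by simp
  also have "\<dots> = (k+1)*d" by simp
  also have "\<dots> \<le> d*d" using mult_le_mono1[of "k+1" d d] k by simp
  finally show ?thesis .
qed

lemma lin_expand:
  assumes S: "lin_map_on d S" and X: "X \<in> carrier_mat d d" and i: "i < d" and j: "j < d"
  shows "S X $$ (i,j) = (\<Sum>q<d*d. X $$ (q div d, q mod d) * S (Em d q) $$ (i,j))"
proof -
  define Xm where "Xm m = mat d d (\<lambda>(k,l). if k*d+l < m then X $$ (k,l) else 0)" for m
  have XmC: "Xm m \<in> carrier_mat d d" for m unfolding Xm_def by simp
  have EC: "Em d q \<in> carrier_mat d d" for q unfolding Em_def by simp
  have step: "Xm (Suc m) = Xm m + X $$ (m div d, m mod d) \<cdot>\<^sub>m Em d m" for m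
  proof (rule eq_matI)
    fix k l assume "k < dim_row (Xm m + X $$ (m div d, m mod d) \<cdot>\<^sub>m Em d m)"
      "l < dim_col (Xm m + X $$ (m div d, m mod d) \<cdot>\<^sub>m Em d m)"
    hence k: "k < d" and l: "l < d" by (auto simp: Xm_def Em_def)
    show "Xm (Suc m) $$ (k, l) = (Xm m + X $$ (m div d, m mod d) \<cdot>\<^sub>m Em d m) $$ (k, l)"
      using k l idx_div[OF k l] idx_mod[OF k l] by (cases "k*d+l = m") (auto simp: Xm_def Em_def)
  qed (auto simp: Xm_def Em_def)
  have main: "S (Xm m) $$ (i,j) = (\<Sum>q<m. X $$ (q div d, q mod d) * S (Em d q) $$ (i,j))" for m
  proof (induction m)
    case 0
    have "Xm 0 = 0\<^sub>m d d" unfolding Xm_def by (auto intro!: eq_matI)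
    thus ?case using lin_zero[OF S] i j by simp
  next
    case (Suc m)
    have "S (Xm (Suc m)) = S (Xm m) + X $$ (m div d, m mod d) \<cdot>\<^sub>m S (Em d m)"
      unfolding step using lin_add[OF S XmC] lin_smult[OF S EC] EC by simp
    thus ?case using Suc lin_closed[OF S XmC, of m] lin_closed[OF S EC, of m] i j by simp
  qed
  have "Xm (d*d) = X"
    using X by (auto intro!: eq_matI simp: Xm_def idx_lt)
  thus ?thesis using main[of "d*d"] by simp
qed

definition fl :: "nat \<Rightarrow> complex mat \<Rightarrow> complex vec" where
  "fl d X = vec (d*d) (\<lambda>p. X $$ (p div d, p mod d))"
definition uf :: "nat \<Rightarrow> complex vec \<Rightarrow> complex mat" where
  "uf d v = mat d d (\<lambda>(i,j). v $ (i*d+j))"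

lemma div_lt: "p < d*d \<Longrightarrow> p div d < (d::nat)"
  by (simp add: less_mult_imp_div_less)
lemma mod_lt: "p < d*d \<Longrightarrow> p mod d < (d::nat)"
  by (metis mod_less_divisor mult_0_right neq0_conv not_less_zero)

lemma fl_uf: "v \<in> carrier_vec (d*d) \<Longrightarrow> fl d (uf d v) = v"
  unfolding fl_def uf_def by (auto intro!: eq_vecI simp: div_lt mod_lt)

lemma fl_inj: "X \<in> carrier_mat d d \<Longrightarrow> Y \<in> carrier_mat d d \<Longrightarrow> fl d X = fl d Y \<Longrightarrow> X = Y"
proof (rule eq_matI)
  fix i j assume X: "X \<in> carrier_mat d d" and Y: "Y \<in> carrier_mat d d" and e: "fl d X = fl d Y"
    and i: "i < dim_row Y" and j: "j < dim_col Y"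
  hence i': "i < d" and j': "j < d" by auto
  have "fl d X $ (i*d+j) = fl d Y $ (i*d+j)" using e by simp
  thus "X $$ (i,j) = Y $$ (i,j)" unfolding fl_def using idx_lt[OF i' j'] idx_div[OF i' j'] idx_mod[OF i' j'] by simp
qed auto

lemma inj_surj:
  assumes S: "lin_map_on d S" and inj: "\<And>X. X \<in> carrier_mat d d \<Longrightarrow> S X = 0\<^sub>m d d \<Longrightarrow> X = 0\<^sub>m d d"
    and Y: "Y \<in> carrier_mat d d"
  shows "\<exists>X\<in>carrier_mat d d. S X = Y"
proof -
  define n where "n = d*d"
  define A where "A = mat n n (\<lambda>(p,q). S (Em d q) $$ (p div d, p mod d))"
  have AC: "A \<in> carrier_mat n n" unfolding A_def by simp
  have rep: "fl d (S X) = A *\<^sub>v fl d X" if X: "X \<in> carrier_mat d d" for X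
  proof (rule eq_vecI)
    fix p assume "p < dim_vec (A *\<^sub>v fl d X)"
    hence p: "p < n" unfolding A_def by simp
    have "fl d (S X) $ p = S X $$ (p div d, p mod d)" using p unfolding fl_def n_def by simp
    also have "\<dots> = (\<Sum>q<d*d. X $$ (q div d, q mod d) * S (Em d q) $$ (p div d, p mod d))"
      by (rule lin_expand[OF S X]) (use p in \<open>auto simp: n_def div_lt mod_lt\<close>)
    also have "\<dots> = (A *\<^sub>v fl d X) $ p"
      using p unfolding A_def fl_def n_def scalar_prod_def
      by (auto simp: lessThan_atLeast0 scalar_prod_def intro!: sum.cong)
    finally show "fl d (S X) $ p = (A *\<^sub>v fl d X) $ p" .
  qed (auto simp: fl_def A_def n_def)
  have "det A \<noteq> 0"
  proof
    assume "det A = 0"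
    then obtain v where v: "v \<in> carrier_vec n" "v \<noteq> 0\<^sub>v n" "A *\<^sub>v v = 0\<^sub>v n"
      using det_0_iff_vec_prod_zero[OF AC] by auto
    have uC: "uf d v \<in> carrier_mat d d" unfolding uf_def by simp
    have fl0: "fl d (0\<^sub>m d d) = 0\<^sub>v n" unfolding fl_def n_def by (auto intro!: eq_vecI simp: div_lt mod_lt)
    have "fl d (S (uf d v)) = 0\<^sub>v n" using rep[OF uC] fl_uf v unfolding n_def by simp
    also have "\<dots> = fl d (0\<^sub>m d d)" using fl0 by simp
    finally have "S (uf d v) = 0\<^sub>m d d" by (rule fl_inj[OF lin_closed[OF S uC] zero_carrier_mat])
    hence "uf d v = 0\<^sub>m d d" using inj uC by blast
    hence "fl d (uf d v) = 0\<^sub>v n" using fl0 by simp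
    hence "v = 0\<^sub>v n" using fl_uf v(1) unfolding n_def by simp
    thus False using v by simp
  qed
  hence "A \<in> Units (ring_mat TYPE(complex) n ())" by (rule det_non_zero_imp_unit[OF AC])
  then obtain B where B: "B \<in> carrier_mat n n" "A * B = 1\<^sub>m n"
    unfolding Units_def by (auto simp: ring_mat_simps)
  define w where "w = B *\<^sub>v fl d Y"
  have flY: "fl d Y \<in> carrier_vec n" unfolding fl_def n_def by simp
  have wC: "w \<in> carrier_vec n" unfolding w_def using B(1) flY by simp
  define X where "X = uf d w"
  have XC: "X \<in> carrier_mat d d" unfolding X_def uf_def by simp
  have "fl d (S X) = A *\<^sub>v w" using rep[OF XC] fl_uf wC unfolding X_def n_def by simp
  also have "\<dots> = (A * B) *\<^sub>v fl d Y" unfolding w_def by (rule assoc_mult_mat_vec[OF AC B(1) flY, symmetric])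
  also have "\<dots> = fl d Y" using B flY by simp
  finally have "S X = Y" by (rule fl_inj[OF lin_closed[OF S XC] Y])
  thus ?thesis using XC by blast
qed



lemma qf_support:
  assumes S: "S \<subseteq> {..<n}" and v: "\<And>k. k \<notin> S \<Longrightarrow> v k = 0"
  shows "qf n A v = (\<Sum>k\<in>S. \<Sum>l\<in>S. cnj (v k) * A $$ (k, l) * v l)"
proof -
  have fS: "finite S" using S finite_subset by blast
  have "qf n A v = (\<Sum>k<n. \<Sum>l\<in>S. cnj (v k) * A $$ (k, l) * v l)"
    unfolding qf_def by (rule sum.cong[OF refl], rule sum.mono_neutral_right) (use S v in auto)
  also have "\<dots> = (\<Sum>k\<in>S. \<Sum>l\<in>S. cnj (v k) * A $$ (k, l) * v l)"
    by (rule sum.mono_neutral_right) (use S v in auto)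
  finally show ?thesis .
qed

lemma qf_two:
  assumes i: "i < n" and j: "j < n" and ij: "i \<noteq> j"
  shows "qf n A (\<lambda>k. if k = i then a else if k = j then b else 0) =
     cnj a * A $$ (i,i) * a + cnj a * A $$ (i,j) * b + cnj b * A $$ (j,i) * a + cnj b * A $$ (j,j) * b"
  by (subst qf_support[where S="{i,j}"]) (use i j ij in auto)

lemma qf_one:
  assumes i: "i < n"
  shows "qf n A (\<lambda>k. if k = i then 1 else 0) = A $$ (i,i)"
  by (subst qf_support[where S="{i}"]) (use i in auto)

lemma psd_diag:
  assumes P: "psd_mat n A" and i: "i < n"
  shows "Im (A $$ (i,i)) = 0" "Re (A $$ (i,i)) \<ge> 0"
  using P qf_one[OF i, of A] unfolding psd_mat_qf by metis+

lemma psd_herm: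
  assumes P: "psd_mat n A" and i: "i < n" and j: "j < n"
  shows "A $$ (j,i) = cnj (A $$ (i,j))"
proof (cases "i = j")
  case True thus ?thesis using psd_diag[OF P i] by (simp add: complex_eq_iff)
next
  case False
  have q: "\<And>v. Im (qf n A v) = 0" using P unfolding psd_mat_qf by auto
  have 1: "Im (A $$ (i,j)) + Im (A $$ (j,i)) = 0"
    using q[of "\<lambda>k. if k = i then 1 else if k = j then 1 else 0"] psd_diag[OF P i] psd_diag[OF P j]
    unfolding qf_two[OF i j False] by simp
  have 2: "Re (A $$ (i,j)) - Re (A $$ (j,i)) = 0"
    using q[of "\<lambda>k. if k = i then 1 else if k = j then \<i> else 0"] psd_diag[OF P i] psd_diag[OF P j]
    unfolding qf_two[OF i j False] by simp
  show ?thesis using 1 2 by (simp add: complex_eq_iff)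
qed

lemma psd_entry_bound:
  assumes P: "psd_mat n A" and i: "i < n" and j: "j < n"
  shows "cmod (A $$ (i,j)) \<le> (Re (A $$ (i,i)) + Re (A $$ (j,j))) / 2"
proof (cases "i = j")
  case True thus ?thesis using psd_diag[OF P i] by (simp add: cmod_eq_Re)
next
  case False
  show ?thesis
  proof (cases "A $$ (i,j) = 0")
    case True thus ?thesis using psd_diag(2)[OF P i] psd_diag(2)[OF P j] by simp
  next
    case nz: False
    define u where "u = A $$ (i,j)"
    define r where "r = cmod u"
    have r0: "r > 0" using nz unfolding r_def u_def by simp
    define b where "b = - cnj u / complex_of_real r"
    have uu: "u * cnj u = complex_of_real (r^2)" unfolding r_def by (simp add: complex_norm_square del: of_real_power)
    have hb: "A $$ (j,i) = cnj u" using psd_herm[OF P i j] unfolding u_def .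
    have t1: "u * b = - complex_of_real r"
      unfolding b_def using uu r0 by (simp add: field_simps power2_eq_square)
    have t2: "cnj b * cnj u = - complex_of_real r"
      unfolding b_def using uu r0 by (simp add: field_simps power2_eq_square mult.commute)
    have t3: "cnj b * b = 1"
      unfolding b_def using uu r0 by (simp add: field_simps power2_eq_square mult.commute)
    have "0 \<le> Re (qf n A (\<lambda>k. if k = i then 1 else if k = j then b else 0))"
      using P unfolding psd_mat_qf by auto
    also have "qf n A (\<lambda>k. if k = i then 1 else if k = j then b else 0)
        = A $$ (i,i) + u * b + cnj b * cnj u + (cnj b * b) * A $$ (j,j)"
      unfolding qf_two[OF i j False] hb u_def by (simp add: algebra_simps)
    also have "\<dots> = A $$ (i,i) - 2 * complex_of_real r + A $$ (j,j)"
      unfolding t1 t2 t3 by simp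
    finally show ?thesis unfolding r_def u_def by simp
  qed
qed

lemma psd_entry_trace:
  assumes P: "psd_mat n A" and i: "i < n" and j: "j < n"
  shows "cmod (A $$ (i,j)) \<le> Re (\<Sum>k<n. A $$ (k,k))"
proof -
  have nn: "\<And>k. k \<in> {..<n} \<Longrightarrow> 0 \<le> Re (A $$ (k,k))" using psd_diag[OF P] by auto
  have "Re (A $$ (i,i)) \<le> (\<Sum>k<n. Re (A $$ (k,k)))"
    by (rule member_le_sum[of i]) (use i nn in auto)
  moreover have "Re (A $$ (j,j)) \<le> (\<Sum>k<n. Re (A $$ (k,k)))"
    by (rule member_le_sum[of j]) (use j nn in auto)
  ultimately show ?thesis using psd_entry_bound[OF P i j] by (simp add: Re_sum)
qed



definition herm :: "nat \<Rightarrow> complex mat \<Rightarrow> bool" where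
  "herm n H \<longleftrightarrow> H \<in> carrier_mat n n \<and> (\<forall>i<n. \<forall>j<n. H $$ (j,i) = cnj (H $$ (i,j)))"

lemma qf_herm_real: assumes H: "herm n H" shows "Im (qf n H v) = 0"
proof -
  have h: "cnj (H $$ (i,j)) = H $$ (j,i)" if ij: "i < n" "j < n" for i j
  proof -
    have e: "H $$ (j,i) = cnj (H $$ (i,j))" using H ij unfolding herm_def by blast
    show ?thesis by (simp only: e)
  qed
  have "cnj (qf n H v) = (\<Sum>i<n. \<Sum>j<n. v i * cnj (H $$ (i,j)) * cnj (v j))"
    unfolding qf_def cnj_sum by simp
  also have "\<dots> = (\<Sum>i<n. \<Sum>j<n. v i * H $$ (j,i) * cnj (v j))"
    by (rule sum.cong[OF refl], rule sum.cong[OF refl]) (simp add: h)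
  also have "\<dots> = (\<Sum>j<n. \<Sum>i<n. v i * H $$ (j,i) * cnj (v j))" by (rule sum.swap)
  also have "\<dots> = qf n H v" unfolding qf_def by (auto intro!: sum.cong simp: mult.commute mult.left_commute)
  finally show ?thesis by (metis Reals_cnj_iff complex_is_Real_iff)
qed

lemma prod_le_sumsq:
  fixes v :: "nat \<Rightarrow> complex"
  assumes i: "i < n" and j: "j < n"
  shows "cmod (v i) * cmod (v j) \<le> (\<Sum>k<n. (cmod (v k))^2)"
proof -
  have nn: "\<And>k. 0 \<le> (cmod (v k))^2" by simp
  have a: "(cmod (v i))^2 \<le> (\<Sum>k<n. (cmod (v k))^2)" by (rule member_le_sum) (use i in auto)
  have b: "(cmod (v j))^2 \<le> (\<Sum>k<n. (cmod (v k))^2)" by (rule member_le_sum) (use j in auto)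
  have "cmod (v i) * cmod (v j) \<le> ((cmod (v i))^2 + (cmod (v j))^2) / 2"
    using sum_squares_bound[of "cmod (v i)" "cmod (v j)"] by (simp add: power2_eq_square)
  moreover have "((cmod (v i))^2 + (cmod (v j))^2) / 2 \<le> (\<Sum>k<n. (cmod (v k))^2)" using a b by simp
  ultimately show ?thesis by (rule order_trans)
qed

lemma qf_bound:
  assumes H: "H \<in> carrier_mat n n"
  shows "cmod (qf n H v) \<le> (\<Sum>i<n. \<Sum>j<n. cmod (H $$ (i,j))) * (\<Sum>k<n. (cmod (v k))^2)"
proof -
  let ?S = "\<Sum>k<n. (cmod (v k))^2"
  have "cmod (qf n H v) \<le> (\<Sum>i<n. cmod (\<Sum>j<n. cnj (v i) * H $$ (i, j) * v j))"
    unfolding qf_def by (rule norm_sum)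
  also have "\<dots> \<le> (\<Sum>i<n. \<Sum>j<n. cmod (cnj (v i) * H $$ (i, j) * v j))"
    by (rule sum_mono, rule norm_sum)
  also have "\<dots> \<le> (\<Sum>i<n. \<Sum>j<n. cmod (H $$ (i,j)) * ?S)"
  proof (rule sum_mono, rule sum_mono)
    fix i j assume i: "i \<in> {..<n}" and j: "j \<in> {..<n}"
    have "cmod (cnj (v i) * H $$ (i, j) * v j) = cmod (H $$ (i,j)) * (cmod (v i) * cmod (v j))"
      by (simp add: norm_mult)
    also have "\<dots> \<le> cmod (H $$ (i,j)) * ?S"
      by (rule mult_left_mono) (use prod_le_sumsq i j in auto)
    finally show "cmod (cnj (v i) * H $$ (i, j) * v j) \<le> cmod (H $$ (i,j)) * ?S" .
  qed
  also have "\<dots> = (\<Sum>i<n. \<Sum>j<n. cmod (H $$ (i,j))) * ?S" by (simp add: sum_distrib_right)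
  finally show ?thesis .
qed

lemma qf_shift:
  assumes H: "H \<in> carrier_mat n n"
  shows "qf n (mat n n (\<lambda>(i,j). H $$ (i,j) + (if i = j then complex_of_real c else 0))) v
         = qf n H v + complex_of_real (c * (\<Sum>k<n. (cmod (v k))^2))"
proof -
  have row: "(\<Sum>j<n. cnj (v i) * (H $$ (i,j) + (if i = j then complex_of_real c else 0)) * v j)
      = (\<Sum>j<n. cnj (v i) * H $$ (i, j) * v j) + complex_of_real c * (cnj (v i) * v i)" if i: "i < n" for i
  proof -
    have "(\<Sum>j<n. cnj (v i) * (H $$ (i,j) + (if i = j then complex_of_real c else 0)) * v j)
       = (\<Sum>j<n. cnj (v i) * H $$ (i, j) * v j + (if i = j then cnj (v i) * complex_of_real c * v j else 0))"
      by (rule sum.cong) (auto simp: algebra_simps)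
    also have "\<dots> = (\<Sum>j<n. cnj (v i) * H $$ (i, j) * v j) + (\<Sum>j<n. if i = j then cnj (v i) * complex_of_real c * v j else 0)"
      by (rule sum.distrib)
    also have "(\<Sum>j<n. if i = j then cnj (v i) * complex_of_real c * v j else 0) = cnj (v i) * complex_of_real c * v i"
      using i by (simp add: sum.delta)
    finally show ?thesis by (simp add: algebra_simps)
  qed
  have "qf n (mat n n (\<lambda>(i,j). H $$ (i,j) + (if i = j then complex_of_real c else 0))) v
      = (\<Sum>i<n. (\<Sum>j<n. cnj (v i) * H $$ (i, j) * v j) + complex_of_real c * (cnj (v i) * v i))"
    unfolding qf_def by (rule sum.cong[OF refl]) (simp add: row[symmetric])
  also have "\<dots> = qf n H v + (\<Sum>i<n. complex_of_real c * (cnj (v i) * v i))"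
    unfolding qf_def sum.distrib by simp
  also have "(\<Sum>i<n. complex_of_real c * (cnj (v i) * v i)) = complex_of_real (c * (\<Sum>k<n. (cmod (v k))^2))"
    by (simp add: sum_distrib_left complex_norm_square mult.commute del: of_real_power)
  finally show ?thesis .
qed

lemma herm_shift_psd:
  assumes H: "herm n H" and c: "c = (\<Sum>i<n. \<Sum>j<n. cmod (H $$ (i,j)))"
  shows "psd_mat n (mat n n (\<lambda>(i,j). H $$ (i,j) + (if i = j then complex_of_real c else 0)))"
  unfolding psd_mat_qf
proof (intro conjI allI)
  fix v
  have HC: "H \<in> carrier_mat n n" using H unfolding herm_def by auto
  show "Im (qf n (mat n n (\<lambda>(i,j). H $$ (i,j) + (if i = j then complex_of_real c else 0))) v) = 0"
    unfolding qf_shift[OF HC] using qf_herm_real[OF H] by simp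
  have "- Re (qf n H v) \<le> cmod (qf n H v)" using abs_Re_le_cmod[of "qf n H v"] by linarith
  also have "\<dots> \<le> c * (\<Sum>k<n. (cmod (v k))^2)" using qf_bound[OF HC] c by simp
  finally show "0 \<le> Re (qf n (mat n n (\<lambda>(i,j). H $$ (i,j) + (if i = j then complex_of_real c else 0))) v)"
    unfolding qf_shift[OF HC] by simp
qed auto

lemma scalar_id_psd:
  assumes c: "c \<ge> 0"
  shows "psd_mat n (mat n n (\<lambda>(i,j). if i = j then complex_of_real c else 0))"
proof -
  have "psd_mat n (mat n n (\<lambda>(i,j). (0\<^sub>m n n) $$ (i,j) + (if i = j then complex_of_real c else 0)))"
    unfolding psd_mat_qf
  proof (intro conjI allI)
    fix v
    have q0: "qf n (0\<^sub>m n n) v = 0" unfolding qf_def by simp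
    show "Im (qf n (mat n n (\<lambda>(i,j). (0\<^sub>m n n) $$ (i,j) + (if i = j then complex_of_real c else 0))) v) = 0"
      unfolding qf_shift[OF zero_carrier_mat] q0 by simp
    show "0 \<le> Re (qf n (mat n n (\<lambda>(i,j). (0\<^sub>m n n) $$ (i,j) + (if i = j then complex_of_real c else 0))) v)"
      unfolding qf_shift[OF zero_carrier_mat] q0 using c by (simp add: sum_nonneg)
  qed auto
  moreover have "mat n n (\<lambda>(i,j). (0\<^sub>m n n) $$ (i,j) + (if i = j then complex_of_real c else 0))
     = mat n n (\<lambda>(i,j). if i = j then complex_of_real c else 0)" by (auto intro!: eq_matI)
  ultimately show ?thesis by simp
qed

lemma herm_decomp:
  assumes H: "herm n H"
  shows "\<exists>P Q. psd_mat n P \<and> psd_mat n Q \<and> (\<forall>i<n. \<forall>j<n. H $$ (i,j) = P $$ (i,j) - Q $$ (i,j))"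
proof -
  define c where "c = (\<Sum>i<n. \<Sum>j<n. cmod (H $$ (i,j)))"
  have c0: "c \<ge> 0" unfolding c_def by (simp add: sum_nonneg)
  show ?thesis
    by (rule exI[of _ "mat n n (\<lambda>(i,j). H $$ (i,j) + (if i = j then complex_of_real c else 0))"],
        rule exI[of _ "mat n n (\<lambda>(i,j). if i = j then complex_of_real c else 0)"])
       (use herm_shift_psd[OF H c_def] scalar_id_psd[OF c0] in auto)
qed

definition lc4 :: "complex \<Rightarrow> complex \<Rightarrow> complex \<Rightarrow> complex \<Rightarrow> complex mat \<Rightarrow> complex mat \<Rightarrow> complex mat \<Rightarrow> complex mat \<Rightarrow> complex mat" where
  "lc4 a b c e P1 P2 P3 P4 = a \<cdot>\<^sub>m P1 + b \<cdot>\<^sub>m P2 + c \<cdot>\<^sub>m P3 + e \<cdot>\<^sub>m P4"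

lemma lc4_carrier: "P1 \<in> carrier_mat n n \<Longrightarrow> P2 \<in> carrier_mat n n \<Longrightarrow> P3 \<in> carrier_mat n n \<Longrightarrow> P4 \<in> carrier_mat n n
  \<Longrightarrow> lc4 a b c e P1 P2 P3 P4 \<in> carrier_mat n n"
  unfolding lc4_def by auto

lemma lc4_index: "P1 \<in> carrier_mat n n \<Longrightarrow> P2 \<in> carrier_mat n n \<Longrightarrow> P3 \<in> carrier_mat n n \<Longrightarrow> P4 \<in> carrier_mat n n
  \<Longrightarrow> i < n \<Longrightarrow> j < n \<Longrightarrow>
  lc4 a b c e P1 P2 P3 P4 $$ (i,j) = a * P1 $$ (i,j) + b * P2 $$ (i,j) + c * P3 $$ (i,j) + e * P4 $$ (i,j)"
  unfolding lc4_def by auto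

lemma decomp:
  assumes X: "X \<in> carrier_mat n n"
  shows "\<exists>P1 P2 P3 P4. psd_mat n P1 \<and> psd_mat n P2 \<and> psd_mat n P3 \<and> psd_mat n P4 \<and>
           X = lc4 1 (-1) \<i> (-\<i>) P1 P2 P3 P4"
proof -
  define H1 where "H1 = mat n n (\<lambda>(i,j). (X $$ (i,j) + cnj (X $$ (j,i))) / 2)"
  define H2 where "H2 = mat n n (\<lambda>(i,j). (X $$ (i,j) - cnj (X $$ (j,i))) / (2 * \<i>))"
  have h1: "herm n H1" unfolding herm_def H1_def by (auto simp: add.commute)
  have h2: "herm n H2" unfolding herm_def H2_def by (auto simp: algebra_simps diff_divide_distrib)
  obtain P1 P2 where P12: "psd_mat n P1" "psd_mat n P2" "\<forall>i<n. \<forall>j<n. H1 $$ (i,j) = P1 $$ (i,j) - P2 $$ (i,j)"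
    using herm_decomp[OF h1] by blast
  obtain P3 P4 where P34: "psd_mat n P3" "psd_mat n P4" "\<forall>i<n. \<forall>j<n. H2 $$ (i,j) = P3 $$ (i,j) - P4 $$ (i,j)"
    using herm_decomp[OF h2] by blast
  have C: "P1 \<in> carrier_mat n n" "P2 \<in> carrier_mat n n" "P3 \<in> carrier_mat n n" "P4 \<in> carrier_mat n n"
    using P12 P34 unfolding psd_mat_def by auto
  have "X = lc4 1 (-1) \<i> (-\<i>) P1 P2 P3 P4"
  proof (rule eq_matI)
    fix i j assume "i < dim_row (lc4 1 (-1) \<i> (-\<i>) P1 P2 P3 P4)" "j < dim_col (lc4 1 (-1) \<i> (-\<i>) P1 P2 P3 P4)"
    hence i: "i < n" and j: "j < n" using lc4_carrier[OF C, of 1 "-1" \<i> "-\<i>"] by (simp_all add: carrier_matD)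
    have "X $$ (i,j) = H1 $$ (i,j) + \<i> * H2 $$ (i,j)" unfolding H1_def H2_def using i j
      by (simp add: field_simps)
    thus "X $$ (i,j) = lc4 1 (-1) \<i> (-\<i>) P1 P2 P3 P4 $$ (i,j)"
      unfolding lc4_index[OF C i j] using P12(3) P34(3) i j by (simp add: algebra_simps)
  qed (use X carrier_matD[OF lc4_carrier[OF C, of 1 "-1" \<i> "-\<i>"]] in auto)
  thus ?thesis using P12 P34 by blast
qed



definition adj :: "complex mat \<Rightarrow> complex mat" where
  "adj A = mat (dim_col A) (dim_row A) (\<lambda>(i,j). cnj (A $$ (j,i)))"

lemma adj_dims[simp]: "dim_row (adj A) = dim_col A" "dim_col (adj A) = dim_row A"
  unfolding adj_def by auto

lemma adj_carrier: "A \<in> carrier_mat n n \<Longrightarrow> adj A \<in> carrier_mat n n"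
  unfolding adj_def by auto

lemma adj_adj: "A \<in> carrier_mat n n \<Longrightarrow> adj (adj A) = A"
  unfolding adj_def by (auto intro!: eq_matI)

lemma psd_adj: assumes "psd_mat n P" shows "adj P = P"
proof -
  have C: "P \<in> carrier_mat n n" using assms unfolding psd_mat_def by auto
  show ?thesis
  proof (rule eq_matI)
    fix i j assume "i < dim_row P" "j < dim_col P"
    hence i: "i < n" and j: "j < n" using C by auto
    have e: "P $$ (i,j) = cnj (P $$ (j,i))" by (rule psd_herm[OF assms j i])
    show "adj P $$ (i,j) = P $$ (i,j)" using i j C unfolding adj_def e by simp
  qed (use C in \<open>auto simp: adj_def\<close>)
qed

lemma adj_lc4:
  assumes C: "P1 \<in> carrier_mat n n" "P2 \<in> carrier_mat n n" "P3 \<in> carrier_mat n n" "P4 \<in> carrier_mat n n"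
  shows "adj (lc4 a b c e P1 P2 P3 P4) = lc4 (cnj a) (cnj b) (cnj c) (cnj e) (adj P1) (adj P2) (adj P3) (adj P4)"
proof -
  have C': "adj P1 \<in> carrier_mat n n" "adj P2 \<in> carrier_mat n n" "adj P3 \<in> carrier_mat n n" "adj P4 \<in> carrier_mat n n"
    using C adj_carrier by auto
  have L: "lc4 a b c e P1 P2 P3 P4 \<in> carrier_mat n n" by (rule lc4_carrier[OF C])
  show ?thesis
  proof (rule eq_matI)
    fix i j
    assume "i < dim_row (lc4 (cnj a) (cnj b) (cnj c) (cnj e) (adj P1) (adj P2) (adj P3) (adj P4))"
      "j < dim_col (lc4 (cnj a) (cnj b) (cnj c) (cnj e) (adj P1) (adj P2) (adj P3) (adj P4))"
    hence i: "i < n" and j: "j < n" using carrier_matD[OF lc4_carrier[OF C']] by auto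
    show "adj (lc4 a b c e P1 P2 P3 P4) $$ (i, j) = lc4 (cnj a) (cnj b) (cnj c) (cnj e) (adj P1) (adj P2) (adj P3) (adj P4) $$ (i, j)"
      unfolding lc4_index[OF C' i j] using L C i j lc4_index[OF C j i] by (simp add: adj_def)
  qed (use carrier_matD[OF L] carrier_matD[OF lc4_carrier[OF C', of "cnj a" "cnj b" "cnj c" "cnj e"]] in simp_all)
qed

lemma lin_lc4:
  assumes T: "lin_map_on d T"
    and C: "P1 \<in> carrier_mat d d" "P2 \<in> carrier_mat d d" "P3 \<in> carrier_mat d d" "P4 \<in> carrier_mat d d"
  shows "T (lc4 a b c e P1 P2 P3 P4) = lc4 a b c e (T P1) (T P2) (T P3) (T P4)"
  unfolding lc4_def using C by (simp add: lin_add[OF T] lin_smult[OF T])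

lemma pos_adj:
  assumes T: "lin_map_on d T" and P: "positive_map d T" and X: "X \<in> carrier_mat d d"
  shows "T (adj X) = adj (T X)"
proof -
  obtain P1 P2 P3 P4 where ps: "psd_mat d P1" "psd_mat d P2" "psd_mat d P3" "psd_mat d P4"
    and XP: "X = lc4 1 (-1) \<i> (-\<i>) P1 P2 P3 P4" using decomp[OF X] by blast
  have C: "P1 \<in> carrier_mat d d" "P2 \<in> carrier_mat d d" "P3 \<in> carrier_mat d d" "P4 \<in> carrier_mat d d"
    using ps unfolding psd_mat_def by auto
  have ps': "psd_mat d (T P1)" "psd_mat d (T P2)" "psd_mat d (T P3)" "psd_mat d (T P4)"
    using ps P unfolding positive_map_def by auto
  have C': "T P1 \<in> carrier_mat d d" "T P2 \<in> carrier_mat d d" "T P3 \<in> carrier_mat d d" "T P4 \<in> carrier_mat d d"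
    using ps' unfolding psd_mat_def by auto
  have "T (adj X) = T (lc4 1 (-1) (-\<i>) \<i> P1 P2 P3 P4)"
    unfolding XP adj_lc4[OF C] psd_adj[OF ps(1)] psd_adj[OF ps(2)] psd_adj[OF ps(3)] psd_adj[OF ps(4)] by simp
  also have "\<dots> = lc4 1 (-1) (-\<i>) \<i> (T P1) (T P2) (T P3) (T P4)" by (rule lin_lc4[OF T C])
  also have "\<dots> = adj (T X)"
    unfolding XP lin_lc4[OF T C] adj_lc4[OF C'] psd_adj[OF ps'(1)] psd_adj[OF ps'(2)] psd_adj[OF ps'(3)] psd_adj[OF ps'(4)] by simp
  finally show ?thesis .
qed

lemma lin_shift:
  assumes T: "lin_map_on d T"
  shows "lin_map_on d (\<lambda>X. T X - z \<cdot>\<^sub>m X)"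
  unfolding lin_map_on_def
proof (intro conjI ballI allI)
  fix X :: "complex mat" assume X: "X \<in> carrier_mat d d"
  show "T X - z \<cdot>\<^sub>m X \<in> carrier_mat d d" using X by (simp add: minus_carrier_mat)
next
  fix X Y :: "complex mat" assume X: "X \<in> carrier_mat d d" and Y: "Y \<in> carrier_mat d d"
  show "T (X + Y) - z \<cdot>\<^sub>m (X + Y) = T X - z \<cdot>\<^sub>m X + (T Y - z \<cdot>\<^sub>m Y)"
    unfolding lin_add[OF T X Y] using lin_closed[OF T X] lin_closed[OF T Y] X Y
    by (auto intro!: eq_matI simp: algebra_simps)
next
  fix c and X :: "complex mat" assume X: "X \<in> carrier_mat d d"
  show "T (c \<cdot>\<^sub>m X) - z \<cdot>\<^sub>m (c \<cdot>\<^sub>m X) = c \<cdot>\<^sub>m (T X - z \<cdot>\<^sub>m X)"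
    unfolding lin_smult[OF T X] using lin_closed[OF T X] X
    by (auto intro!: eq_matI simp: algebra_simps)
qed

lemma shift_zero_iff:
  assumes T: "lin_map_on d T" and X: "X \<in> carrier_mat d d"
  shows "T X - z \<cdot>\<^sub>m X = 0\<^sub>m d d \<longleftrightarrow> T X = z \<cdot>\<^sub>m X"
proof
  assume h: "T X - z \<cdot>\<^sub>m X = 0\<^sub>m d d"
  show "T X = z \<cdot>\<^sub>m X"
  proof (rule eq_matI)
    fix i j assume "i < dim_row (z \<cdot>\<^sub>m X)" "j < dim_col (z \<cdot>\<^sub>m X)"
    hence i: "i < d" and j: "j < d" using X by auto
    have "(T X - z \<cdot>\<^sub>m X) $$ (i,j) = 0" using h i j by simp
    thus "T X $$ (i,j) = (z \<cdot>\<^sub>m X) $$ (i,j)" using i j X lin_closed[OF T X] by simp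
  qed (use X lin_closed[OF T X] in auto)
next
  assume "T X = z \<cdot>\<^sub>m X"
  thus "T X - z \<cdot>\<^sub>m X = 0\<^sub>m d d" using X by (auto intro!: eq_matI)
qed

lemma eigen_spec:
  assumes T: "lin_map_on d T"
  shows "z \<in> spec_set d T \<longleftrightarrow> (\<exists>X\<in>carrier_mat d d. X \<noteq> 0\<^sub>m d d \<and> T X = z \<cdot>\<^sub>m X)"
proof -
  let ?S = "\<lambda>X. T X - z \<cdot>\<^sub>m X"
  have S: "lin_map_on d ?S" by (rule lin_shift[OF T])
  show ?thesis
  proof
    assume z: "z \<in> spec_set d T"
    show "\<exists>X\<in>carrier_mat d d. X \<noteq> 0\<^sub>m d d \<and> T X = z \<cdot>\<^sub>m X"
    proof (rule ccontr)
      assume ne: "\<not> ?thesis"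
      have ker: "X \<in> carrier_mat d d \<Longrightarrow> ?S X = 0\<^sub>m d d \<Longrightarrow> X = 0\<^sub>m d d" for X
        using ne shift_zero_iff[OF T] by blast
      have "bij_betw ?S (carrier_mat d d) (carrier_mat d d)"
        unfolding bij_betw_def
      proof (intro conjI)
        show "inj_on ?S (carrier_mat d d)"
        proof (rule inj_onI)
          fix X Y :: "complex mat" assume X: "X \<in> carrier_mat d d" and Y: "Y \<in> carrier_mat d d" and e: "?S X = ?S Y"
          have YC: "(-1) \<cdot>\<^sub>m Y \<in> carrier_mat d d" using Y by simp
          have "?S (X + (-1) \<cdot>\<^sub>m Y) = ?S X + (-1) \<cdot>\<^sub>m ?S Y"
            using lin_add[OF S X YC] lin_smult[OF S Y] by simp
          also have "\<dots> = 0\<^sub>m d d" unfolding e using carrier_matD[OF lin_closed[OF S Y]] by (auto intro!: eq_matI)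
          finally have "X + (-1) \<cdot>\<^sub>m Y = 0\<^sub>m d d" by (rule ker[OF add_carrier_mat[OF YC]])
          thus "X = Y"
          proof -
            assume h: "X + (-1) \<cdot>\<^sub>m Y = 0\<^sub>m d d"
            show "X = Y"
            proof (rule eq_matI)
              fix i j assume "i < dim_row Y" "j < dim_col Y"
              hence i: "i < d" and j: "j < d" using Y by auto
              have "(X + (-1) \<cdot>\<^sub>m Y) $$ (i,j) = 0" using h i j by simp
              thus "X $$ (i,j) = Y $$ (i,j)" using i j X Y by simp
            qed (use X Y in auto)
          qed
        qed
        show "?S ` carrier_mat d d = carrier_mat d d"
        proof
          show "?S ` carrier_mat d d \<subseteq> carrier_mat d d" using lin_closed[OF S] by auto
          show "carrier_mat d d \<subseteq> ?S ` carrier_mat d d"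
            using inj_surj[OF S ker] by blast
        qed
      qed
      thus False using z unfolding spec_set_def by auto
    qed
  next
    assume "\<exists>X\<in>carrier_mat d d. X \<noteq> 0\<^sub>m d d \<and> T X = z \<cdot>\<^sub>m X"
    then obtain X where X: "X \<in> carrier_mat d d" "X \<noteq> 0\<^sub>m d d" "T X = z \<cdot>\<^sub>m X" by blast
    have "?S X = ?S (0\<^sub>m d d)" using shift_zero_iff[OF T X(1)] X lin_zero[OF S] by simp
    hence "\<not> inj_on ?S (carrier_mat d d)" using X by (meson inj_onD zero_carrier_mat)
    thus "z \<in> spec_set d T" unfolding spec_set_def bij_betw_def by auto
  qed
qed



definition Mb :: "(nat \<Rightarrow> complex) \<Rightarrow> nat \<Rightarrow> nat \<Rightarrow> complex" where
  "Mb \<mu> i j = (if i div 2 = j div 2 then (if i = j then 1 else if even i then \<mu> (i div 2) else cnj (\<mu> (i div 2))) else 0)"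

fun wb :: "(nat \<Rightarrow> complex) \<Rightarrow> nat \<times> bool \<Rightarrow> nat \<Rightarrow> complex" where
  "wb \<mu> (b, True) p = (if p = 2*b then 1 else if p = 2*b+1 then \<mu> b else 0)"
| "wb \<mu> (b, False) p = (if p = 2*b+1 then complex_of_real (sqrt (1 - (cmod (\<mu> b))^2)) else 0)"

lemma wb_zero: "p div 2 \<noteq> b \<Longrightarrow> wb \<mu> (b, t) p = 0"
  by (cases t) auto

lemma block_entry:
  assumes mu: "cmod (\<mu> (p div 2)) \<le> 1"
  shows "Mb \<mu> p q = cnj (wb \<mu> (p div 2, True) p) * wb \<mu> (p div 2, True) q + cnj (wb \<mu> (p div 2, False) p) * wb \<mu> (p div 2, False) q"
proof -
  define a where "a = p div 2"
  have p: "p = 2*a \<or> p = 2*a+1" unfolding a_def by presburger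
  show ?thesis
  proof (cases "q div 2 = a")
    case False
    hence "wb \<mu> (a, t) q = 0" for t using wb_zero by blast
    moreover have "Mb \<mu> p q = 0" using False unfolding Mb_def a_def by auto
    ultimately show ?thesis unfolding a_def[symmetric] by (simp del: wb.simps)
  next
    case True
    hence q: "q = 2*a \<or> q = 2*a+1" by presburger
    have s: "complex_of_real (sqrt (1 - (cmod (\<mu> a))^2)) * complex_of_real (sqrt (1 - (cmod (\<mu> a))^2)) = 1 - complex_of_real ((cmod (\<mu> a))^2)"
    proof -
      have "0 \<le> 1 - (cmod (\<mu> a))^2" using power_le_one[OF norm_ge_zero mu, of 2] unfolding a_def by simp
      hence "sqrt (1 - (cmod (\<mu> a))^2) * sqrt (1 - (cmod (\<mu> a))^2) = 1 - (cmod (\<mu> a))^2" by simp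
      thus ?thesis by (metis of_real_1 of_real_diff of_real_mult)
    qed
    have n: "cnj (\<mu> a) * \<mu> a = complex_of_real ((cmod (\<mu> a))^2)"
      by (simp add: complex_norm_square mult.commute del: of_real_power)
    have e: "(2*a) div 2 = a" "(2*a+1) div 2 = a" by auto
    from p q show ?thesis unfolding a_def[symmetric] Mb_def
      by (elim disjE) (simp_all only: e, simp_all add: s n)
  qed
qed

lemma block_decomp:
  assumes mu: "\<And>b. b < K \<Longrightarrow> cmod (\<mu> b) \<le> 1" and p: "p < 2*K" and q: "q < 2*K"
  shows "Mb \<mu> p q = (\<Sum>r\<in>{..<K}\<times>(UNIV::bool set). cnj (wb \<mu> r p) * wb \<mu> r q)"
proof -
  let ?F = "\<lambda>r. cnj (wb \<mu> r p) * wb \<mu> r q"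
  have "(\<Sum>r\<in>{..<K}\<times>(UNIV::bool set). ?F r) = (\<Sum>b<K. \<Sum>t\<in>(UNIV::bool set). ?F (b,t))"
    by (simp add: sum.cartesian_product case_prod_unfold)
  also have "\<dots> = (\<Sum>b<K. ?F (b,True) + ?F (b,False))"
    by (simp add: UNIV_bool add.commute)
  also have "\<dots> = (\<Sum>b\<in>{p div 2}. ?F (b,True) + ?F (b,False))"
    by (rule sum.mono_neutral_right) (use p wb_zero in auto)
  also have "\<dots> = Mb \<mu> p q" using block_entry[of \<mu> p q] mu[of "p div 2"] p by simp
  finally show ?thesis by simp
qed

lemma forward:
  fixes \<Lambda> :: "complex set"
  assumes fin: "finite \<Lambda>" and n0: "0 \<notin> \<Lambda>" and cj: "cnj ` \<Lambda> = \<Lambda>" and one: "1 \<in> \<Lambda>"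
    and le: "\<forall>z\<in>\<Lambda>. cmod z \<le> 1"
  shows "\<exists>d T. 0 < d \<and> d \<le> 2 * max (card \<Lambda> - 1) 1 \<and>
                   lin_map_on d T \<and> completely_positive d T \<and> trace_preserving d T \<and>
                   spec_set d T - {0} = \<Lambda>"
proof -
  define R where "R = {z\<in>\<Lambda>. 0 < Im z \<or> (Im z = 0 \<and> z \<noteq> 1)}"
  define R' where "R' = (if R = {} then {1} else R)"
  have R'sub: "R' \<subseteq> \<Lambda>" unfolding R'_def R_def using one by auto
  have finR': "finite R'" using R'sub fin finite_subset by blast
  have R'ne: "R' \<noteq> {}" unfolding R'_def by auto
  define K where "K = card R'"
  have K1: "K \<ge> 1" unfolding K_def using finR' R'ne by (simp add: Suc_le_eq card_gt_0_iff)
  have Kle: "K \<le> max (card \<Lambda> - 1) 1"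
  proof (cases "R = {}")
    case True thus ?thesis unfolding K_def R'_def by simp
  next
    case False
    have "R \<subseteq> \<Lambda> - {1}" unfolding R_def by auto
    hence "card R \<le> card (\<Lambda> - {1})" using fin by (simp add: card_mono)
    also have "\<dots> = card \<Lambda> - 1" using one fin by simp
    finally show ?thesis unfolding K_def R'_def using False by simp
  qed
  obtain \<mu> where bij: "bij_betw \<mu> {0..<K} R'" using ex_bij_betw_nat_finite[OF finR'] unfolding K_def by blast
  have muL: "b < K \<Longrightarrow> \<mu> b \<in> \<Lambda>" for b using bij R'sub unfolding bij_betw_def by auto
  have mu1: "b < K \<Longrightarrow> cmod (\<mu> b) \<le> 1" for b using muL le by auto
  define d where "d = 2*K"
  define T where "T = schur d (Mb \<mu>)"
  have "lin_map_on d T" unfolding T_def by (rule lin_schur)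
  moreover have "trace_preserving d T" unfolding T_def by (rule tp_schur) (simp add: Mb_def)
  moreover have "completely_positive d T" unfolding T_def
    by (rule cp_schur[where I="{..<K}\<times>(UNIV::bool set)" and w="wb \<mu>"])
       (auto intro!: block_decomp mu1 simp: d_def)
  moreover have "spec_set d T - {0} = \<Lambda>"
  proof -
    have "spec_set d T = {Mb \<mu> i j | i j. i < d \<and> j < d}" unfolding T_def by (rule spec_schur)
    moreover have "{Mb \<mu> i j | i j. i < d \<and> j < d} - {0} = \<Lambda>"
    proof (rule Set.set_eqI, rule iffI)
      fix z assume "z \<in> {Mb \<mu> i j | i j. i < d \<and> j < d} - {0}"
      then obtain i j where i: "i < d" and j: "j < d" and z: "z = Mb \<mu> i j" and z0: "z \<noteq> 0" by auto
      have ib: "i div 2 < K" using i unfolding d_def by auto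
      have "cnj (\<mu> (i div 2)) \<in> \<Lambda>" using muL[OF ib] cj by blast
      thus "z \<in> \<Lambda>" using z z0 one muL[OF ib] unfolding Mb_def by (auto split: if_splits)
    next
      fix z assume zL: "z \<in> \<Lambda>"
      have zE: "z \<in> {Mb \<mu> i j | i j. i < d \<and> j < d}"
      proof (cases "z = 1")
        case True
        have "Mb \<mu> 0 0 = 1" unfolding Mb_def by simp
        moreover have "0 < d" using K1 unfolding d_def by simp
        ultimately show ?thesis using True by (intro CollectI exI[of _ 0] conjI) auto
      next
        case False
        show ?thesis
        proof (cases "z \<in> R")
          case True
          hence "z \<in> R'" unfolding R'_def by auto
          then obtain b where b: "b < K" and zb: "z = \<mu> b" using bij unfolding bij_betw_def by auto
          have "Mb \<mu> (2*b) (2*b+1) = \<mu> b" unfolding Mb_def by simp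
          moreover have "2*b < d" "2*b+1 < d" using b unfolding d_def by auto
          ultimately show ?thesis using zb by (intro CollectI exI[of _ "2*b"] exI[of _ "2*b+1"] conjI) auto
        next
          case zR: False
          hence im: "Im z < 0" using False zL unfolding R_def by auto
          have "cnj z \<in> \<Lambda>" using zL cj by blast
          hence "cnj z \<in> R" using im unfolding R_def by auto
          hence "cnj z \<in> R'" unfolding R'_def by auto
          then obtain b where b: "b < K" and zb: "cnj z = \<mu> b" using bij unfolding bij_betw_def by auto
          have "Mb \<mu> (2*b+1) (2*b) = cnj (\<mu> b)" unfolding Mb_def by simp
          moreover have "2*b < d" "2*b+1 < d" using b unfolding d_def by auto
          ultimately show ?thesis using zb by (metis (mono_tags, lifting) complex_cnj_cnj mem_Collect_eq)
        qed
      qed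
      moreover have "z \<noteq> 0" using zL n0 by auto
      ultimately show "z \<in> {Mb \<mu> i j | i j. i < d \<and> j < d} - {0}" by simp
    qed
    ultimately show ?thesis by simp
  qed
  moreover have "0 < d" "d \<le> 2 * max (card \<Lambda> - 1) 1" using K1 Kle unfolding d_def by auto
  ultimately show ?thesis by blast
qed



lemma lin_id: "lin_map_on d (\<lambda>X. X)" unfolding lin_map_on_def by auto

lemma iter_props:
  assumes T: "lin_map_on d T" and P: "positive_map d T" and TP: "trace_preserving d T"
  shows "lin_map_on d (T ^^ k) \<and> positive_map d (T ^^ k) \<and> trace_preserving d (T ^^ k)"
proof (induction k)
  case 0
  show ?case using lin_id[of d] unfolding positive_map_def trace_preserving_def by (simp add: id_def)
next
  case (Suc k)
  hence L: "lin_map_on d (T ^^ k)" and Pk: "positive_map d (T ^^ k)" and Tk: "trace_preserving d (T ^^ k)" by auto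
  have "lin_map_on d (T ^^ Suc k)" unfolding lin_map_on_def
  proof (intro conjI ballI allI)
    fix X :: "complex mat" assume X: "X \<in> carrier_mat d d"
    show "(T ^^ Suc k) X \<in> carrier_mat d d" using lin_closed[OF T lin_closed[OF L X]] by simp
  next
    fix X Y :: "complex mat" assume X: "X \<in> carrier_mat d d" and Y: "Y \<in> carrier_mat d d"
    show "(T ^^ Suc k) (X + Y) = (T ^^ Suc k) X + (T ^^ Suc k) Y"
      using lin_add[OF L X Y] lin_add[OF T lin_closed[OF L X] lin_closed[OF L Y]] by simp
  next
    fix c and X :: "complex mat" assume X: "X \<in> carrier_mat d d"
    show "(T ^^ Suc k) (c \<cdot>\<^sub>m X) = c \<cdot>\<^sub>m (T ^^ Suc k) X"
      using lin_smult[OF L X] lin_smult[OF T lin_closed[OF L X]] by simp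
  qed
  moreover have "positive_map d (T ^^ Suc k)" using P Pk unfolding positive_map_def by simp
  moreover have "trace_preserving d (T ^^ Suc k)"
    using TP Tk lin_closed[OF L] unfolding trace_preserving_def by simp
  ultimately show ?case by blast
qed

lemma iter_eigen:
  assumes T: "lin_map_on d T" and X: "X \<in> carrier_mat d d" and e: "T X = z \<cdot>\<^sub>m X"
  shows "(T ^^ k) X = z ^ k \<cdot>\<^sub>m X"
proof (induction k)
  case 0 show ?case using X by (auto intro!: eq_matI)
next
  case (Suc k)
  have "(T ^^ Suc k) X = T (z ^ k \<cdot>\<^sub>m X)" using Suc by simp
  also have "\<dots> = z ^ k \<cdot>\<^sub>m (z \<cdot>\<^sub>m X)" using lin_smult[OF T X] e by simp
  also have "\<dots> = z ^ Suc k \<cdot>\<^sub>m X" using X by (auto intro!: eq_matI)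
  finally show ?case .
qed

lemma converse:
  assumes d: "0 < d" and T: "lin_map_on d T" and P: "positive_map d T" and TP: "trace_preserving d T"
  shows "cnj ` spec_set d T = spec_set d T \<and> 1 \<in> spec_set d T \<and> (\<forall>z\<in>spec_set d T. cmod z \<le> 1)"
proof (intro conjI)
  have cl: "cnj z \<in> spec_set d T" if z: "z \<in> spec_set d T" for z
  proof -
    obtain X where X: "X \<in> carrier_mat d d" "X \<noteq> 0\<^sub>m d d" "T X = z \<cdot>\<^sub>m X"
      using z eigen_spec[OF T] by blast
    have aC: "adj X \<in> carrier_mat d d" using adj_carrier[OF X(1)] .
    have "adj X \<noteq> 0\<^sub>m d d"
    proof
      assume "adj X = 0\<^sub>m d d"
      hence "adj (adj X) = adj (0\<^sub>m d d)" by simp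
      also have "adj (0\<^sub>m d d) = 0\<^sub>m d d" unfolding adj_def by (auto intro!: eq_matI)
      finally show False using adj_adj[OF X(1)] X(2) by simp
    qed
    moreover have "T (adj X) = cnj z \<cdot>\<^sub>m adj X"
    proof -
      have "T (adj X) = adj (T X)" by (rule pos_adj[OF T P X(1)])
      also have "\<dots> = adj (z \<cdot>\<^sub>m X)" using X by simp
      also have "\<dots> = cnj z \<cdot>\<^sub>m adj X" using X(1) unfolding adj_def by (auto intro!: eq_matI)
      finally show ?thesis .
    qed
    ultimately show ?thesis using eigen_spec[OF T] aC by blast
  qed
  show "cnj ` spec_set d T = spec_set d T"
  proof
    show "cnj ` spec_set d T \<subseteq> spec_set d T" using cl by blast
    show "spec_set d T \<subseteq> cnj ` spec_set d T"
    proof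
      fix z assume "z \<in> spec_set d T"
      hence "cnj z \<in> spec_set d T" by (rule cl)
      thus "z \<in> cnj ` spec_set d T" by (rule image_eqI[rotated]) simp
    qed
  qed
next
  show "1 \<in> spec_set d T"
  proof (rule ccontr)
    assume "1 \<notin> spec_set d T"
    hence b: "bij_betw (\<lambda>X. T X - 1 \<cdot>\<^sub>m X) (carrier_mat d d) (carrier_mat d d)" unfolding spec_set_def by auto
    have "1\<^sub>m d \<in> (\<lambda>X. T X - 1 \<cdot>\<^sub>m X) ` carrier_mat d d" using b unfolding bij_betw_def by simp
    then obtain X where e': "1\<^sub>m d = T X - 1 \<cdot>\<^sub>m X" and X: "X \<in> carrier_mat d d"
      by (rule imageE)
    note e = e'[symmetric]
    have TX: "T X \<in> carrier_mat d d" by (rule lin_closed[OF T X])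
    have "(\<Sum>i<d. (1\<^sub>m d :: complex mat) $$ (i,i)) = (\<Sum>i<d. T X $$ (i,i) - X $$ (i,i))"
      unfolding e[symmetric] using X TX by (auto intro!: sum.cong)
    also have "\<dots> = 0" using TP X unfolding trace_preserving_def by (simp add: sum_subtractf)
    finally show False using d by simp
  qed
next
  show "\<forall>z\<in>spec_set d T. cmod z \<le> 1"
  proof
    fix z assume z: "z \<in> spec_set d T"
    obtain X where X: "X \<in> carrier_mat d d" "X \<noteq> 0\<^sub>m d d" "T X = z \<cdot>\<^sub>m X"
      using z eigen_spec[OF T] by blast
    obtain i j where ij: "i < d" "j < d" "X $$ (i,j) \<noteq> 0"
    proof (rule ccontr)
      assume "\<not> thesis"
      hence "\<And>i j. i < d \<Longrightarrow> j < d \<Longrightarrow> X $$ (i,j) = 0" using that by blast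
      hence "X = 0\<^sub>m d d" using X(1) by (auto intro!: eq_matI)
      thus False using X(2) by simp
    qed
    obtain P1 P2 P3 P4 where ps: "psd_mat d P1" "psd_mat d P2" "psd_mat d P3" "psd_mat d P4"
      and XP: "X = lc4 1 (-1) \<i> (-\<i>) P1 P2 P3 P4" using decomp[OF X(1)] by blast
    have C: "P1 \<in> carrier_mat d d" "P2 \<in> carrier_mat d d" "P3 \<in> carrier_mat d d" "P4 \<in> carrier_mat d d"
      using ps unfolding psd_mat_def by auto
    define B where "B = Re (\<Sum>k<d. P1 $$ (k,k)) + Re (\<Sum>k<d. P2 $$ (k,k)) + Re (\<Sum>k<d. P3 $$ (k,k)) + Re (\<Sum>k<d. P4 $$ (k,k))"
    have bound: "cmod z ^ k * cmod (X $$ (i,j)) \<le> B" for k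
    proof -
      have It: "lin_map_on d (T ^^ k)" "positive_map d (T ^^ k)" "trace_preserving d (T ^^ k)"
        using iter_props[OF T P TP] by auto
      have eb: "cmod (((T ^^ k) Q) $$ (i,j)) \<le> Re (\<Sum>m<d. Q $$ (m,m))" if Q: "psd_mat d Q" for Q
      proof -
        have pQ: "psd_mat d ((T ^^ k) Q)" using It(2) Q unfolding positive_map_def by auto
        have QC: "Q \<in> carrier_mat d d" using Q unfolding psd_mat_def by auto
        have "cmod (((T ^^ k) Q) $$ (i,j)) \<le> Re (\<Sum>m<d. ((T ^^ k) Q) $$ (m,m))"
          by (rule psd_entry_trace[OF pQ ij(1,2)])
        also have "(\<Sum>m<d. ((T ^^ k) Q) $$ (m,m)) = (\<Sum>m<d. Q $$ (m,m))"
          using It(3) QC unfolding trace_preserving_def by blast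
        finally show ?thesis .
      qed
      have CT: "(T ^^ k) P1 \<in> carrier_mat d d" "(T ^^ k) P2 \<in> carrier_mat d d" "(T ^^ k) P3 \<in> carrier_mat d d" "(T ^^ k) P4 \<in> carrier_mat d d"
        using lin_closed[OF It(1)] C by auto
      have "z ^ k * X $$ (i,j) = ((T ^^ k) X) $$ (i,j)"
        using iter_eigen[OF T X(1) X(3), of k] X(1) ij by simp
      also have "\<dots> = lc4 1 (-1) \<i> (-\<i>) ((T ^^ k) P1) ((T ^^ k) P2) ((T ^^ k) P3) ((T ^^ k) P4) $$ (i,j)"
        unfolding XP lin_lc4[OF It(1) C] ..
      also have "\<dots> = ((T ^^ k) P1) $$ (i,j) - ((T ^^ k) P2) $$ (i,j) + \<i> * ((T ^^ k) P3) $$ (i,j) - \<i> * ((T ^^ k) P4) $$ (i,j)"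
        unfolding lc4_index[OF CT ij(1,2)] by simp
      finally have eq: "z ^ k * X $$ (i,j) = ((T ^^ k) P1) $$ (i,j) - ((T ^^ k) P2) $$ (i,j) + \<i> * ((T ^^ k) P3) $$ (i,j) - \<i> * ((T ^^ k) P4) $$ (i,j)" .
      have "cmod z ^ k * cmod (X $$ (i,j)) = cmod (z ^ k * X $$ (i,j))" by (simp add: norm_mult norm_power)
      also have "\<dots> \<le> cmod (((T ^^ k) P1) $$ (i,j)) + cmod (((T ^^ k) P2) $$ (i,j)) + cmod (((T ^^ k) P3) $$ (i,j)) + cmod (((T ^^ k) P4) $$ (i,j))"
        unfolding eq by (rule order_trans[OF norm_triangle_ineq4], rule add_mono,
             rule order_trans[OF norm_triangle_ineq], rule add_mono,
             rule order_trans[OF norm_triangle_ineq4], auto simp: norm_mult)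
      also have "\<dots> \<le> B" unfolding B_def using eb[OF ps(1)] eb[OF ps(2)] eb[OF ps(3)] eb[OF ps(4)] by linarith
      finally show ?thesis .
    qed
    show "cmod z \<le> 1"
    proof (rule ccontr)
      assume "\<not> cmod z \<le> 1"
      hence gt: "1 < cmod z" by simp
      have xp: "cmod (X $$ (i,j)) > 0" using ij(3) by simp
      obtain k where k: "B / cmod (X $$ (i,j)) < cmod z ^ k" using real_arch_pow[OF gt] by blast
      hence "B < cmod z ^ k * cmod (X $$ (i,j))" using xp by (simp add: divide_less_eq)
      thus False using bound[of k] by simp
    qed
  qed
qed


theorem theorem3:
  shows "(\<forall>\<Lambda> :: complex set.
            finite \<Lambda> \<and> 0 \<notin> \<Lambda> \<and> cnj ` \<Lambda> = \<Lambda> \<and> 1 \<in> \<Lambda> \<and> (\<forall>z\<in>\<Lambda>. cmod z \<le> 1) \<longrightarrow>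
            (\<exists>d T. 0 < d \<and> d \<le> 2 * max (card \<Lambda> - 1) 1 \<and>
                   lin_map_on d T \<and> completely_positive d T \<and> trace_preserving d T \<and>
                   spec_set d T - {0} = \<Lambda>))
       \<and> (\<forall>d T. 0 < d \<and> lin_map_on d T \<and> positive_map d T \<and> trace_preserving d T \<longrightarrow>
            cnj ` spec_set d T = spec_set d T \<and> 1 \<in> spec_set d T \<and>
            (\<forall>z\<in>spec_set d T. cmod z \<le> 1))"
proof (rule conjI)
  show "\<forall>\<Lambda> :: complex set.
            finite \<Lambda> \<and> 0 \<notin> \<Lambda> \<and> cnj ` \<Lambda> = \<Lambda> \<and> 1 \<in> \<Lambda> \<and> (\<forall>z\<in>\<Lambda>. cmod z \<le> 1) \<longrightarrow>
            (\<exists>d T. 0 < d \<and> d \<le> 2 * max (card \<Lambda> - 1) 1 \<and>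
                   lin_map_on d T \<and> completely_positive d T \<and> trace_preserving d T \<and>
                   spec_set d T - {0} = \<Lambda>)"
  proof (intro allI impI)
    fix \<Lambda> :: "complex set"
    assume h: "finite \<Lambda> \<and> 0 \<notin> \<Lambda> \<and> cnj ` \<Lambda> = \<Lambda> \<and> 1 \<in> \<Lambda> \<and> (\<forall>z\<in>\<Lambda>. cmod z \<le> 1)"
    show "\<exists>d T. 0 < d \<and> d \<le> 2 * max (card \<Lambda> - 1) 1 \<and>
                   lin_map_on d T \<and> completely_positive d T \<and> trace_preserving d T \<and>
                   spec_set d T - {0} = \<Lambda>"
      by (rule forward[OF conjunct1[OF h] conjunct1[OF conjunct2[OF h]]
            conjunct1[OF conjunct2[OF conjunct2[OF h]]]
            conjunct1[OF conjunct2[OF conjunct2[OF conjunct2[OF h]]]]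
            conjunct2[OF conjunct2[OF conjunct2[OF conjunct2[OF h]]]]])
  qed
  show "\<forall>d T. 0 < d \<and> lin_map_on d T \<and> positive_map d T \<and> trace_preserving d T \<longrightarrow>
            cnj ` spec_set d T = spec_set d T \<and> 1 \<in> spec_set d T \<and>
            (\<forall>z\<in>spec_set d T. cmod z \<le> 1)"
  proof (intro allI impI)
    fix d T
    assume h: "0 < d \<and> lin_map_on d T \<and> positive_map d T \<and> trace_preserving d T"
    show "cnj ` spec_set d T = spec_set d T \<and> 1 \<in> spec_set d T \<and> (\<forall>z\<in>spec_set d T. cmod z \<le> 1)"
      by (rule converse[OF conjunct1[OF h] conjunct1[OF conjunct2[OF h]]
            conjunct1[OF conjunct2[OF conjunct2[OF h]]] conjunct2[OF conjunct2[OF conjunct2[OF h]]]])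
  qed
qed

end
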